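(* Let $q,r$ be MIAs over $I$ and $O$ such that $r\sqsubseteq q$. If $q$ is input-enabled, then $r$ is input-enabled.
   Context: A Modal Interface Automaton (MIA) over disjoint alphabets $I,O$ is a tuple $(Q,I,O,\longrightarrow_\Box,\longrightarrow_\Diamond)$ with $Q$ a finite set of states and must/may transition relations $\longrightarrow_\Box,\longrightarrow_\Diamond\subseteq Q\times(I\cup O)\times Q$ such that every must transition is a may transition, and for inputs $i\in I$: must $i$-transitions are deterministic, and every may $i$-transition is a must transition. A MIA $Q$ is input-enabled iff for all $q\in Q$ and all $i\in I$, $q\overset{i}{\longrightarrow}_\Box$. A relation $\mathcal R\subseteq P\times Q$ between MIAs is a MIA-refinement iff for all $(p,q)\in\mathcal R$: (1) $q\overset{a}{\longrightarrow}_\Box q'$, $a\in I\cup O$, implies $\exists p'$: $p\overset{a}{\longrightarrow}_\Box p'$, $(p',q')\in\mathcal R$; (2) $p\overset{\alpha}{\longrightarrow}_\Diamond p'$, $\alpha\in O$, implies $\exists q'$: $q\overset{\alpha}{\longrightarrow}_\Diamond q'$, $(p',q')\in\mathcal R$. $r\sqsubseteq q$ means some MIA-refinement contains $(r,q)$; a MIA is identified with a designated state when writing $r\sqsubseteq q$, and input-enabledness of $r$ refers to its automaton. *)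

theory Defs
  imports Main
begin

record ('s, 'a) mia =
  states  :: "'s set"
  inputs  :: "'a set"
  outputs :: "'a set"
  must    :: "('s \<times> 'a \<times> 's) set"
  may     :: "('s \<times> 'a \<times> 's) set"

definition is_mia :: "('s, 'a) mia \<Rightarrow> bool" where
  "is_mia M \<longleftrightarrow>
     finite (states M) \<and>
     inputs M \<inter> outputs M = {} \<and>
     may M \<subseteq> states M \<times> (inputs M \<union> outputs M) \<times> states M \<and>
     must M \<subseteq> may M \<and>
     (\<forall>p i p' p''. i \<in> inputs M \<longrightarrow> (p, i, p') \<in> must M \<longrightarrow> (p, i, p'') \<in> must M \<longrightarrow> p' = p'') \<and>
     (\<forall>p i p'. i \<in> inputs M \<longrightarrow> (p, i, p') \<in> may M \<longrightarrow> (p, i, p') \<in> must M)"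

definition input_enabled :: "('s, 'a) mia \<Rightarrow> bool" where
  "input_enabled M \<longleftrightarrow>
     (\<forall>q \<in> states M. \<forall>i \<in> inputs M. \<exists>q'. (q, i, q') \<in> must M)"

definition mia_refinement :: "('s, 'a) mia \<Rightarrow> ('t, 'a) mia \<Rightarrow> ('s \<times> 't) set \<Rightarrow> bool" where
  "mia_refinement P Q R \<longleftrightarrow>
     R \<subseteq> states P \<times> states Q \<and>
     (\<forall>(p, q) \<in> R.
        (\<forall>a q'. a \<in> inputs Q \<union> outputs Q \<longrightarrow> (q, a, q') \<in> must Q \<longrightarrow>
            (\<exists>p'. (p, a, p') \<in> must P \<and> (p', q') \<in> R)) \<and>
        (\<forall>\<alpha> p'. \<alpha> \<in> outputs P \<longrightarrow> (p, \<alpha>, p') \<in> may P \<longrightarrow>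
            (\<exists>q'. (q, \<alpha>, q') \<in> may Q \<and> (p', q') \<in> R)))"

definition refines :: "('s, 'a) mia \<Rightarrow> 's \<Rightarrow> ('t, 'a) mia \<Rightarrow> 't \<Rightarrow> bool" where
  "refines P r Q q \<longleftrightarrow> (\<exists>R. mia_refinement P Q R \<and> (r, q) \<in> R)"

(* The MIA identified with designated state r: the automaton P restricted to
   the states reachable from r via (may-)transitions. *)
definition reachable :: "('s, 'a) mia \<Rightarrow> 's \<Rightarrow> 's set" where
  "reachable P r = {p. (r, p) \<in> {(x, y). \<exists>a. (x, a, y) \<in> may P}\<^sup>*}"

definition rooted :: "('s, 'a) mia \<Rightarrow> 's \<Rightarrow> ('s, 'a) mia" where
  "rooted P r = P\<lparr> states := reachable P r,
                   must := {(x, a, y) \<in> must P. x \<in> reachable P r},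
                   may := {(x, a, y) \<in> may P. x \<in> reachable P r} \<rparr>"

end

theory Submission
  imports Defs
begin

theorem lemma3:
  fixes I Out :: "'a set" and P :: "('s, 'a) mia" and Q :: "('t, 'a) mia" and r :: 's and q :: 't
  assumes "is_mia P" and "is_mia Q"
    and "inputs P = I" and "outputs P = Out" and "inputs Q = I" and "outputs Q = Out"
    and "r \<in> states P" and "q \<in> states Q"
    and "refines P r Q q"
    and "input_enabled (rooted Q q)"
  shows "input_enabled (rooted P r)"
proof -
  obtain R where R: "mia_refinement P Q R" "(r, q) \<in> R"
    using assms(9) unfolding refines_def by blast
  have QE: "\<And>q' i. q' \<in> reachable Q q \<Longrightarrow> i \<in> I \<Longrightarrow> \<exists>q''. (q', i, q'') \<in> must Q"
    using assms(10) assms(5) unfolding input_enabled_def rooted_def by auto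
  have C1: "\<And>p q' a q''. (p, q') \<in> R \<Longrightarrow> a \<in> I \<union> Out \<Longrightarrow> (q', a, q'') \<in> must Q \<Longrightarrow>
      \<exists>p'. (p, a, p') \<in> must P \<and> (p', q'') \<in> R"
    using R(1) assms(5,6) unfolding mia_refinement_def by blast
  have C2: "\<And>p q' a p'. (p, q') \<in> R \<Longrightarrow> a \<in> Out \<Longrightarrow> (p, a, p') \<in> may P \<Longrightarrow>
      \<exists>q''. (q', a, q'') \<in> may Q \<and> (p', q'') \<in> R"
    using R(1) assms(4) unfolding mia_refinement_def by blast
  have mayP: "\<And>x a y. (x, a, y) \<in> may P \<Longrightarrow> a \<in> I \<union> Out"
    using assms(1,3,4) unfolding is_mia_def by blast
  have mayMustP: "\<And>x a y. a \<in> I \<Longrightarrow> (x, a, y) \<in> may P \<Longrightarrow> (x, a, y) \<in> must P"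
    using assms(1,3) unfolding is_mia_def by blast
  have detP: "\<And>x a y z. a \<in> I \<Longrightarrow> (x, a, y) \<in> must P \<Longrightarrow> (x, a, z) \<in> must P \<Longrightarrow> y = z"
    using assms(1,3) unfolding is_mia_def by blast
  have mustMayQ: "\<And>x a y. (x, a, y) \<in> must Q \<Longrightarrow> (x, a, y) \<in> may Q"
    using assms(2) unfolding is_mia_def by blast
  have reachQ: "\<And>x a y. x \<in> reachable Q q \<Longrightarrow> (x, a, y) \<in> may Q \<Longrightarrow> y \<in> reachable Q q"
    unfolding reachable_def by (auto intro: rtrancl_into_rtrancl)
  have inv: "\<exists>q'. q' \<in> reachable Q q \<and> (p, q') \<in> R" if "p \<in> reachable P r" for p
  proof -
    have "(r, p) \<in> {(x, y). \<exists>a. (x, a, y) \<in> may P}\<^sup>*" using that unfolding reachable_def by simp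
    then show ?thesis
    proof (induction rule: rtrancl_induct)
      case base
      then show ?case using R(2) unfolding reachable_def by auto
    next
      case (step y z)
      then obtain q' where q': "q' \<in> reachable Q q" "(y, q') \<in> R" by blast
      from step(2) obtain a where a: "(y, a, z) \<in> may P" by blast
      have "a \<in> I \<union> Out" using mayP a by blast
      then show ?case
      proof
        assume aI: "a \<in> I"
        obtain q'' where q'': "(q', a, q'') \<in> must Q" using QE q' aI by blast
        obtain p' where p': "(y, a, p') \<in> must P" "(p', q'') \<in> R" using C1 q'(2) aI q'' by blast
        have "p' = z" using detP aI p'(1) mayMustP[OF aI a] by blast
        then show ?case using p' reachQ[OF q'(1) mustMayQ[OF q'']] by blast
      next
        assume aO: "a \<in> Out"
        then show ?case using C2[OF q'(2) aO a] reachQ[OF q'(1)] by blast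
      qed
    qed
  qed
  show ?thesis
    unfolding input_enabled_def
  proof (intro ballI)
    fix p i assume p: "p \<in> states (rooted P r)" and i: "i \<in> inputs (rooted P r)"
    have pr: "p \<in> reachable P r" using p unfolding rooted_def by simp
    have iI: "i \<in> I" using i assms(3) unfolding rooted_def by simp
    obtain q' where q': "q' \<in> reachable Q q" "(p, q') \<in> R" using inv pr by blast
    obtain q'' where "(q', i, q'') \<in> must Q" using QE q'(1) iI by blast
    then obtain p' where "(p, i, p') \<in> must P" using C1 q'(2) iI by blast
    then show "\<exists>p'. (p, i, p') \<in> must (rooted P r)" using pr unfolding rooted_def by auto
  qed
qed

end
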